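(* Let $d=3$, $k\ge2$, and let the discrete spaces and bilinear forms be as in the context. Let $(\sigma_h,\lambda_h)\in\Sigma_h^{k-1}\times S_h^{k+1}$ satisfy $b(\sigma_h,\operatorname{curl}(\phi_h))+b^g(\phi_h,\lambda_h)=0$ for all $\phi_h\in W_h^k$. Then \[\|\sigma_h\|_{L^2}^2+\|\nabla\lambda_h\|_{L^2}^2\lesssim\nu\,a(\sigma_h,\sigma_h).\]
   Context: $\Omega\subset\mathbb{R}^3$ bounded simply connected Lipschitz domain, $\nu>0$ constant. $\mathcal{T}$ shape-regular quasi-uniform tetrahedral triangulation with mesh size $h$, $\mathcal{F}$ its facets (interior and boundary); on facets $n$ is a unit normal (outward on $\partial\Omega$), $[\![\cdot]\!]$ the jump (the trace on boundary facets). For vectors $v_t:=v-(v\cdot n)n$; for matrices $\tau_{nn}:=n^T\tau n$, $\tau_{nt}:=\tau n-\tau_{nn}n$. $\mathcal{P}^k(\mathcal{T},X)$: piecewise polynomials of degree $\le k$. Spaces: $S_h^k:=\mathcal{P}^k(\mathcal{T},\mathbb{R})\cap H_0^1(\Omega)$; $W_h^k:=\mathcal{P}^k(\mathcal{T},\mathbb{R}^3)\cap H_0(\operatorname{curl},\Omega)$; $\Sigma_h^k:=\{\sigma_h\in\mathcal{P}^k(\mathcal{T},\mathbb{R}^{3\times3}):\operatorname{tr}\sigma_h=0,\ [\![(\sigma_h)_{nt}]\!]=0 \text{ and } (\sigma_h)_{nt}|_F\in\mathcal{P}^{k-1}(F,\mathbb{R}^3)\ \forall F\}$. Forms: $a(\sigma,\tau):=\frac1\nu\int_\Omega\sigma:\tau\,dx$;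 $b(\tau,v):=-\sum_{T}\int_T\tau:\nabla v\,dx+\sum_{F}\int_F\tau_{nt}\cdot[\![v_t]\!]\,ds$; $b^g(\phi,\mu):=\int_\Omega\phi\cdot\nabla\mu\,dx$. $\lesssim$ hides constants independent of $h$ and $\nu$. *)

theory Defs
  imports "HOL-Analysis.Analysis"
begin

type_synonym pt = "real^3"
type_synonym mat3 = "real^3^3"
(* a discrete (piecewise) field is stored elementwise: element T (vertex set) \<mapsto> local polynomial *)
type_synonym 'a pw = "pt set \<Rightarrow> pt \<Rightarrow> 'a"

definition lipschitz_domain :: "pt set \<Rightarrow> bool" where
  "lipschitz_domain \<Omega> \<longleftrightarrow> open \<Omega> \<and> bounded \<Omega> \<and> connected \<Omega> \<and> \<Omega> \<noteq> {} \<and>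
     (\<forall>p\<in>frontier \<Omega>. \<exists>r>0. \<exists>Q::pt \<Rightarrow> pt. \<exists>g::real^2 \<Rightarrow> real. \<exists>L.
        orthogonal_transformation Q \<and> L-lipschitz_on UNIV g \<and>
        \<Omega> \<inter> ball p r = {x \<in> ball p r. (Q (x - p))$3 < g (vector [(Q (x - p))$1, (Q (x - p))$2])})"

definition triangulation :: "pt set \<Rightarrow> pt set set \<Rightarrow> bool" where
  "triangulation \<Omega> \<T> \<longleftrightarrow> finite \<T> \<and> \<T> \<noteq> {} \<and>
     (\<forall>T\<in>\<T>. card T = 4 \<and> \<not> affine_dependent T) \<and>
     \<Union>((\<lambda>T. convex hull T) ` \<T>) = closure \<Omega> \<and>
     (\<forall>T1\<in>\<T>. \<forall>T2\<in>\<T>. convex hull T1 \<inter> convex hull T2 = convex hull (T1 \<inter> T2))"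

definition shape_regular :: "real \<Rightarrow> pt set set \<Rightarrow> bool" where
  "shape_regular \<rho> \<T> \<longleftrightarrow> (\<forall>T\<in>\<T>. \<exists>x r. ball x r \<subseteq> convex hull T \<and> diameter T \<le> \<rho> * r)"

definition mesh_size :: "pt set set \<Rightarrow> real" where
  "mesh_size \<T> = Max (diameter ` \<T>)"

definition quasi_uniform :: "real \<Rightarrow> pt set set \<Rightarrow> bool" where
  "quasi_uniform \<rho> \<T> \<longleftrightarrow> (\<forall>T\<in>\<T>. mesh_size \<T> \<le> \<rho> * diameter T)"

definition facets :: "pt set set \<Rightarrow> pt set set" where
  "facets \<T> = {F. \<exists>T\<in>\<T>. F \<subseteq> T \<and> card F = 3}"

definition elems_of :: "pt set set \<Rightarrow> pt set \<Rightarrow> pt set set" where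
  "elems_of \<T> F = {T\<in>\<T>. F \<subseteq> T}"

definition interior_facet :: "pt set set \<Rightarrow> pt set \<Rightarrow> bool" where
  "interior_facet \<T> F \<longleftrightarrow> F \<in> facets \<T> \<and> card (elems_of \<T> F) = 2"

definition boundary_facet :: "pt set set \<Rightarrow> pt set \<Rightarrow> bool" where
  "boundary_facet \<T> F \<longleftrightarrow> F \<in> facets \<T> \<and> card (elems_of \<T> F) = 1"

definition fverts :: "pt set \<Rightarrow> pt \<times> pt \<times> pt" where
  "fverts F = (SOME (a,b,c). F = {a,b,c})"

definition outward_normal :: "pt set \<Rightarrow> pt set \<Rightarrow> pt" where
  "outward_normal T F = (case fverts F of (a,b,c) \<Rightarrow>
     let m = cross3 (b - a) (c - a); n0 = (1 / norm m) *\<^sub>R m; p = (THE p. p \<in> T - F)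
     in if n0 \<bullet> (p - a) > 0 then - n0 else n0)"

text \<open>the element fixing the orientation of a facet, and the facet normal n_F
  (outward on boundary facets)\<close>
definition ref_elem :: "pt set set \<Rightarrow> pt set \<Rightarrow> pt set" where
  "ref_elem \<T> F = (SOME T. T \<in> \<T> \<and> F \<subseteq> T)"

definition facet_normal :: "pt set set \<Rightarrow> pt set \<Rightarrow> pt" where
  "facet_normal \<T> F = outward_normal (ref_elem \<T> F) F"

text \<open>surface integral over a triangular facet (2-dim. Hausdorff measure via affine parametrization)\<close>
definition facet_integral :: "pt set \<Rightarrow> (pt \<Rightarrow> real) \<Rightarrow> real" where
  "facet_integral F f = (case fverts F of (a,b,c) \<Rightarrow>
     integral {(s,t). 0 \<le> s \<and> 0 \<le> t \<and> s + t \<le> 1}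
       (\<lambda>(s,t). f (a + s *\<^sub>R (b - a) + t *\<^sub>R (c - a))) * norm (cross3 (b - a) (c - a)))"

definition poly_deg :: "nat \<Rightarrow> (pt \<Rightarrow> real) \<Rightarrow> bool" where
  "poly_deg k p \<longleftrightarrow> (\<exists>c :: nat \<Rightarrow> nat \<Rightarrow> nat \<Rightarrow> real. \<forall>x.
     p x = (\<Sum>i\<le>k. \<Sum>j\<le>k. \<Sum>l\<le>k. if i + j + l \<le> k then c i j l * (x$1)^i * (x$2)^j * (x$3)^l else 0))"

definition vpoly_deg :: "nat \<Rightarrow> (pt \<Rightarrow> real^3) \<Rightarrow> bool" where
  "vpoly_deg k v \<longleftrightarrow> (\<forall>i. poly_deg k (\<lambda>x. v x $ i))"

definition mpoly_deg :: "nat \<Rightarrow> (pt \<Rightarrow> mat3) \<Rightarrow> bool" where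
  "mpoly_deg k v \<longleftrightarrow> (\<forall>i j. poly_deg k (\<lambda>x. v x $ i $ j))"

definition grad :: "(pt \<Rightarrow> real) \<Rightarrow> pt \<Rightarrow> real^3" where
  "grad p x = (\<chi> j. frechet_derivative p (at x) (axis j 1))"

definition jac :: "(pt \<Rightarrow> real^3) \<Rightarrow> pt \<Rightarrow> mat3" where
  "jac v x = (\<chi> i j. frechet_derivative (\<lambda>y. v y $ i) (at x) (axis j 1))"

definition curl :: "(pt \<Rightarrow> real^3) \<Rightarrow> pt \<Rightarrow> real^3" where
  "curl v x = (let J = jac v x in vector [J$3$2 - J$2$3, J$1$3 - J$3$1, J$2$1 - J$1$2])"

definition tang :: "pt \<Rightarrow> real^3 \<Rightarrow> real^3" where
  "tang n v = v - (v \<bullet> n) *\<^sub>R n"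

definition mtrace :: "mat3 \<Rightarrow> real" where
  "mtrace \<tau> = (\<Sum>i\<in>UNIV. \<tau>$i$i)"

definition nn_comp :: "pt \<Rightarrow> mat3 \<Rightarrow> real" where
  "nn_comp n \<tau> = n \<bullet> (\<tau> *v n)"

definition nt_comp :: "pt \<Rightarrow> mat3 \<Rightarrow> real^3" where
  "nt_comp n \<tau> = \<tau> *v n - nn_comp n \<tau> *\<^sub>R n"

definition frob :: "mat3 \<Rightarrow> mat3 \<Rightarrow> real" where
  "frob \<sigma> \<tau> = (\<Sum>i\<in>UNIV. \<Sum>j\<in>UNIV. \<sigma>$i$j * \<tau>$i$j)"

text \<open>S_h^k: continuous piecewise P^k, vanishing on the boundary (= P^k(T) \<inter> H^1_0)\<close>
definition S_h :: "pt set \<Rightarrow> pt set set \<Rightarrow> nat \<Rightarrow> real pw set" where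
  "S_h \<Omega> \<T> k = {\<mu>. (\<forall>T\<in>\<T>. poly_deg k (\<mu> T)) \<and>
     (\<forall>T1\<in>\<T>. \<forall>T2\<in>\<T>. \<forall>x \<in> convex hull T1 \<inter> convex hull T2. \<mu> T1 x = \<mu> T2 x) \<and>
     (\<forall>T\<in>\<T>. \<forall>x \<in> convex hull T \<inter> frontier \<Omega>. \<mu> T x = 0)}"

text \<open>W_h^k: piecewise P^k vector fields with continuous tangential traces and zero
  tangential trace on the boundary (= P^k(T) \<inter> H_0(curl))\<close>
definition W_h :: "pt set set \<Rightarrow> nat \<Rightarrow> (real^3) pw set" where
  "W_h \<T> k = {\<phi>. (\<forall>T\<in>\<T>. vpoly_deg k (\<phi> T)) \<and>
     (\<forall>F. interior_facet \<T> F \<longrightarrow> (\<forall>T1\<in>elems_of \<T> F. \<forall>T2\<in>elems_of \<T> F. \<forall>x\<in>convex hull F.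
         tang (facet_normal \<T> F) (\<phi> T1 x) = tang (facet_normal \<T> F) (\<phi> T2 x))) \<and>
     (\<forall>F. boundary_facet \<T> F \<longrightarrow> (\<forall>T\<in>elems_of \<T> F. \<forall>x\<in>convex hull F.
         tang (facet_normal \<T> F) (\<phi> T x) = 0))}"

definition Sigma_h :: "pt set set \<Rightarrow> nat \<Rightarrow> mat3 pw set" where
  "Sigma_h \<T> k = {\<sigma>. (\<forall>T\<in>\<T>. mpoly_deg k (\<sigma> T) \<and> (\<forall>x. mtrace (\<sigma> T x) = 0)) \<and>
     (\<forall>F. interior_facet \<T> F \<longrightarrow> (\<forall>T1\<in>elems_of \<T> F. \<forall>T2\<in>elems_of \<T> F. \<forall>x\<in>convex hull F.
         nt_comp (facet_normal \<T> F) (\<sigma> T1 x) = nt_comp (facet_normal \<T> F) (\<sigma> T2 x))) \<and>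
     (\<forall>F\<in>facets \<T>. \<forall>T\<in>elems_of \<T> F. \<exists>q. vpoly_deg (k - 1) q \<and>
         (\<forall>x\<in>convex hull F. nt_comp (facet_normal \<T> F) (\<sigma> T x) = q x))}"

definition curl_h :: "(real^3) pw \<Rightarrow> (real^3) pw" where
  "curl_h \<phi> = (\<lambda>T. curl (\<phi> T))"

definition a_form :: "real \<Rightarrow> pt set set \<Rightarrow> mat3 pw \<Rightarrow> mat3 pw \<Rightarrow> real" where
  "a_form \<nu> \<T> \<sigma> \<tau> = (1 / \<nu>) * (\<Sum>T\<in>\<T>. integral (convex hull T) (\<lambda>x. frob (\<sigma> T x) (\<tau> T x)))"

text \<open>jump of the tangential part across F (n_F points out of ref_elem; trace on boundary facets)\<close>
definition jump_t :: "pt set set \<Rightarrow> pt set \<Rightarrow> (real^3) pw \<Rightarrow> pt \<Rightarrow> real^3" where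
  "jump_t \<T> F v x = (\<Sum>T\<in>elems_of \<T> F.
     (if T = ref_elem \<T> F then 1 else -1) *\<^sub>R tang (facet_normal \<T> F) (v T x))"

definition b_form :: "pt set set \<Rightarrow> mat3 pw \<Rightarrow> (real^3) pw \<Rightarrow> real" where
  "b_form \<T> \<tau> v =
     - (\<Sum>T\<in>\<T>. integral (convex hull T) (\<lambda>x. frob (\<tau> T x) (jac (v T) x)))
     + (\<Sum>F\<in>facets \<T>. facet_integral F
          (\<lambda>x. nt_comp (facet_normal \<T> F) (\<tau> (ref_elem \<T> F) x) \<bullet> jump_t \<T> F v x))"

definition bg_form :: "pt set set \<Rightarrow> (real^3) pw \<Rightarrow> real pw \<Rightarrow> real" where
  "bg_form \<T> \<phi> \<mu> = (\<Sum>T\<in>\<T>. integral (convex hull T) (\<lambda>x. \<phi> T x \<bullet> grad (\<mu> T) x))"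

definition L2sq_mat :: "pt set set \<Rightarrow> mat3 pw \<Rightarrow> real" where
  "L2sq_mat \<T> \<sigma> = (\<Sum>T\<in>\<T>. integral (convex hull T) (\<lambda>x. frob (\<sigma> T x) (\<sigma> T x)))"

definition L2sq_grad :: "pt set set \<Rightarrow> real pw \<Rightarrow> real" where
  "L2sq_grad \<T> \<mu> = (\<Sum>T\<in>\<T>. integral (convex hull T) (\<lambda>x. grad (\<mu> T) x \<bullet> grad (\<mu> T) x))"

end

theory Submission
  imports Defs
begin

definition mono3 :: "nat \<times> nat \<times> nat \<Rightarrow> pt \<Rightarrow> real" where
  "mono3 e x = x$1^(fst e) * x$2^(fst (snd e)) * x$3^(snd (snd e))"
definition deg3 :: "nat \<times> nat \<times> nat \<Rightarrow> nat" where
  "deg3 e = fst e + fst (snd e) + snd (snd e)"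
definition comp3 :: "3 \<Rightarrow> nat \<times> nat \<times> nat \<Rightarrow> nat" where
  "comp3 d e = (if d = 1 then fst e else if d = 2 then fst (snd e) else snd (snd e))"
definition sh3 :: "3 \<Rightarrow> nat \<times> nat \<times> nat \<Rightarrow> nat \<times> nat \<times> nat" where
  "sh3 d e = (if d = 1 then (fst e - 1, snd e) else if d = 2 then (fst e, fst (snd e) - 1, snd (snd e))
     else (fst e, fst (snd e), snd (snd e) - 1))"

lemma vn_deriv[derivative_intros]: "((\<lambda>x::pt. x$i) has_derivative (\<lambda>h. h$i)) F"
  by (rule bounded_linear_imp_has_derivative[OF bounded_linear_vec_nth])

lemma mono_deriv:
  "(mono3 e has_derivative (\<lambda>h. \<Sum>d\<in>UNIV. real (comp3 d e) * mono3 (sh3 d e) x * h$d)) (at x)"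
  unfolding mono3_def
  apply (rule derivative_eq_intros refl)+
  apply (simp add: sum_3 comp3_def sh3_def algebra_simps)
  done

lemma axis_sum: "(\<Sum>d\<in>UNIV. f d * (g d * (axis i 1 :: pt) $ d)) = f i * g i"
proof -
  have "(\<lambda>d. f d * (g d * (axis i 1 :: pt) $ d)) = (\<lambda>d. if d = i then f d * g d else 0)"
    by (auto simp: axis_def)
  then show ?thesis by (subst \<open>_ = _\<close>) simp
qed

definition lc :: "('t \<Rightarrow> real) \<Rightarrow> ('t \<Rightarrow> nat \<times> nat \<times> nat) \<Rightarrow> 't set \<Rightarrow> pt \<Rightarrow> real" where
  "lc a e S x = (\<Sum>t\<in>S. a t * mono3 (e t) x)"

lemma lc_deriv:
  assumes "finite S"
  shows "(lc a e S has_derivative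
     (\<lambda>h. \<Sum>t\<in>S. a t * (\<Sum>d\<in>UNIV. real (comp3 d (e t)) * mono3 (sh3 d (e t)) x * h$d))) (at x)"
  unfolding lc_def
  by (intro has_derivative_sum has_derivative_mult_right mono_deriv)

lemma lc_partial:
  assumes "finite S"
  shows "frechet_derivative (lc a e S) (at x) (axis i 1) =
     lc (\<lambda>t. a t * real (comp3 i (e t))) (\<lambda>t. sh3 i (e t)) S x"
  unfolding frechet_derivative_at[OF lc_deriv[OF assms], symmetric]
  by (simp add: axis_sum lc_def mult.assoc mult.left_commute)

lemma lc_grad:
  assumes "finite S"
  shows "grad (lc a e S) x $ i = lc (\<lambda>t. a t * real (comp3 i (e t))) (\<lambda>t. sh3 i (e t)) S x"
  unfolding grad_def using lc_partial[OF assms] by simp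

lemma lc_grad_fun:
  assumes "finite S"
  shows "(\<lambda>x. grad (lc a e S) x $ i) = lc (\<lambda>t. a t * real (comp3 i (e t))) (\<lambda>t. sh3 i (e t)) S"
  using lc_grad[OF assms] by blast

lemma comp_sh_sym: "real (comp3 i t) * real (comp3 j (sh3 i t)) = real (comp3 j t) * real (comp3 i (sh3 j t))"
  using exhaust_3[of i] exhaust_3[of j] by (auto simp: comp3_def sh3_def)

lemma sh_sh_sym: "sh3 j (sh3 i t) = sh3 i (sh3 j t)"
  using exhaust_3[of i] exhaust_3[of j] by (auto simp: sh3_def)

lemma lc_jac:
  assumes "finite S"
  shows "jac (grad (lc a e S)) x $ i $ j = jac (grad (lc a e S)) x $ j $ i"
proof -
  have "jac (grad (lc a e S)) x $ i $ j = lc (\<lambda>t. a t * real (comp3 i (e t)) * real (comp3 j (sh3 i (e t))))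
     (\<lambda>t. sh3 j (sh3 i (e t))) S x" for i j
    unfolding jac_def lc_grad_fun[OF assms] using lc_partial[OF assms] by simp
  then show ?thesis by (simp add: mult.assoc comp_sh_sym sh_sh_sym)
qed

lemma lc_curl_grad:
  assumes "finite S"
  shows "curl (grad (lc a e S)) x = 0"
  unfolding curl_def Let_def
  by (simp add: lc_jac[OF assms, where i=3] lc_jac[OF assms, where i=1 and j=2] vec_eq_iff forall_3 vector_3)

definition TR :: "nat \<Rightarrow> (nat \<times> nat \<times> nat) set" where
  "TR K = {..K} \<times> {..K} \<times> {..K}"

lemma finite_TR[simp]: "finite (TR K)" by (simp add: TR_def)

lemma sum_prod: "sum f (A \<times> B) = (\<Sum>x\<in>A. \<Sum>y\<in>B. f (x, y))"
  by (simp add: sum.cartesian_product)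

lemma sum_TR: "(\<Sum>t\<in>TR K. f t) = (\<Sum>i\<le>K. \<Sum>j\<le>K. \<Sum>l\<le>K. f (i, j, l))"
  by (simp add: TR_def sum_prod)

lemma poly_deg_alt: "poly_deg K p \<longleftrightarrow>
   (\<exists>c. \<forall>x. p x = (\<Sum>t\<in>TR K. if deg3 t \<le> K then c t * mono3 t x else 0))"
proof
  assume "poly_deg K p"
  then obtain c where c: "\<forall>x. p x = (\<Sum>i\<le>K. \<Sum>j\<le>K. \<Sum>l\<le>K. if i + j + l \<le> K then c i j l * (x$1)^i * (x$2)^j * (x$3)^l else 0)"
    unfolding poly_deg_def by blast
  show "\<exists>c. \<forall>x. p x = (\<Sum>t\<in>TR K. if deg3 t \<le> K then c t * mono3 t x else 0)"
    apply (rule exI[of _ "\<lambda>t. c (fst t) (fst (snd t)) (snd (snd t))"])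
    apply (unfold sum_TR c[rule_format])
    apply (simp add: deg3_def mono3_def mult.assoc cong: if_cong)
    done
next
  assume "\<exists>c. \<forall>x. p x = (\<Sum>t\<in>TR K. if deg3 t \<le> K then c t * mono3 t x else 0)"
  then obtain c where c: "\<forall>x. p x = (\<Sum>t\<in>TR K. if deg3 t \<le> K then c t * mono3 t x else 0)" by blast
  show "poly_deg K p" unfolding poly_deg_def
    apply (rule exI[of _ "\<lambda>i j l. c (i, j, l)"])
    apply (unfold c[rule_format] sum_TR)
    apply (simp add: deg3_def mono3_def mult.assoc cong: if_cong)
    done
qed

lemma poly_deg_lc: "poly_deg K p \<Longrightarrow> \<exists>c. p = lc (\<lambda>t. if deg3 t \<le> K then c t else 0) id (TR K)"
  unfolding poly_deg_alt lc_def
proof (elim exE)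
  fix c assume c: "\<forall>x. p x = (\<Sum>t\<in>TR K. if deg3 t \<le> K then c t * mono3 t x else 0)"
  have "p = (\<lambda>x. \<Sum>t\<in>TR K. (if deg3 t \<le> K then c t else 0) * mono3 (id t) x)"
  proof
    fix x show "p x = (\<Sum>t\<in>TR K. (if deg3 t \<le> K then c t else 0) * mono3 (id t) x)"
      unfolding c[rule_format] by (rule sum.cong) auto
  qed
  then show "\<exists>c. p = (\<lambda>x. \<Sum>t\<in>TR K. (if deg3 t \<le> K then c t else 0) * mono3 (id t) x)" by blast
qed

lemma poly_deg_0: "poly_deg K (\<lambda>x. 0)"
  unfolding poly_deg_alt
proof
  show "\<forall>x. 0 = (\<Sum>t\<in>TR K. if deg3 t \<le> K then (0::real) * mono3 t x else 0)"
    by (simp only: mult_zero_left if_cancel sum.neutral_const) simp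
qed

lemma poly_deg_add: "poly_deg K f \<Longrightarrow> poly_deg K g \<Longrightarrow> poly_deg K (\<lambda>x. f x + g x)"
  unfolding poly_deg_alt
proof (elim exE)
  fix c1 c2 assume c1: "\<forall>x. f x = (\<Sum>t\<in>TR K. if deg3 t \<le> K then c1 t * mono3 t x else 0)"
    and c2: "\<forall>x. g x = (\<Sum>t\<in>TR K. if deg3 t \<le> K then c2 t * mono3 t x else 0)"
  show "\<exists>c. \<forall>x. f x + g x = (\<Sum>t\<in>TR K. if deg3 t \<le> K then c t * mono3 t x else 0)"
    by (rule exI[of _ "\<lambda>t. c1 t + c2 t"]) (simp add: c1 c2 sum.distrib[symmetric] if_distrib distrib_right cong: if_cong)
qed

lemma poly_deg_scale: "poly_deg K f \<Longrightarrow> poly_deg K (\<lambda>x. r * f x)"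
  unfolding poly_deg_alt
proof (elim exE)
  fix c1 assume c1: "\<forall>x. f x = (\<Sum>t\<in>TR K. if deg3 t \<le> K then c1 t * mono3 t x else 0)"
  show "\<exists>c. \<forall>x. r * f x = (\<Sum>t\<in>TR K. if deg3 t \<le> K then c t * mono3 t x else 0)"
    by (rule exI[of _ "\<lambda>t. r * c1 t"]) (simp add: c1 sum_distrib_left if_distrib mult.assoc cong: if_cong)
qed

lemma poly_deg_mono: "deg3 e \<le> K \<Longrightarrow> poly_deg K (mono3 e)"
  unfolding poly_deg_alt
proof -
  assume e: "deg3 e \<le> K"
  then have eT: "e \<in> TR K" by (cases e) (auto simp: TR_def deg3_def)
  have "mono3 e x = (\<Sum>t\<in>TR K. if deg3 t \<le> K then (if t = e then 1 else 0) * mono3 t x else 0)" for x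
  proof -
    have fe: "(\<lambda>t. if deg3 t \<le> K then (if t = e then 1 else 0) * mono3 t x else 0) = (\<lambda>t. if t = e then mono3 t x else 0)"
      using e by auto
    show ?thesis using eT by (subst fe) simp
  qed
  then show "\<exists>c. \<forall>x. mono3 e x = (\<Sum>t\<in>TR K. if deg3 t \<le> K then c t * mono3 t x else 0)"
    by (intro exI[of _ "\<lambda>t. if t = e then 1 else 0"]) blast
qed

lemma poly_deg_lc_rev:
  assumes "finite S" "\<forall>t\<in>S. a t \<noteq> 0 \<longrightarrow> deg3 (e t) \<le> K"
  shows "poly_deg K (lc a e S)"
  using assms
proof (induction S rule: finite_induct)
  case empty
  then show ?case by (simp add: lc_def poly_deg_0)
next
  case (insert t S)
  have eq: "lc a e (insert t S) = (\<lambda>x. a t * mono3 (e t) x + lc a e S x)"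
    using insert by (simp add: lc_def fun_eq_iff)
  have "poly_deg K (\<lambda>x. a t * mono3 (e t) x)"
  proof (cases "a t = 0")
    case True then show ?thesis using poly_deg_0 by simp
  next
    case False then show ?thesis using insert by (auto intro!: poly_deg_scale poly_deg_mono)
  qed
  then show ?case unfolding eq using insert by (auto intro!: poly_deg_add)
qed

lemma deg_sh: "comp3 i t \<noteq> 0 \<Longrightarrow> deg3 t \<le> Suc K \<Longrightarrow> deg3 (sh3 i t) \<le> K"
  using exhaust_3[of i] by (cases t) (auto simp: comp3_def sh3_def deg3_def)

lemma poly_grad:
  assumes "poly_deg (Suc K) p"
  shows "poly_deg K (\<lambda>x. grad p x $ i)"
proof -
  obtain c where c: "p = lc (\<lambda>t. if deg3 t \<le> Suc K then c t else 0) id (TR (Suc K))"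
    using poly_deg_lc[OF assms] by blast
  show ?thesis unfolding c lc_grad_fun[OF finite_TR]
    apply (rule poly_deg_lc_rev)
    using deg_sh by (auto split: if_splits)
qed

lemma poly_curl_grad:
  assumes "poly_deg K p"
  shows "curl (grad p) x = 0"
proof -
  obtain c where c: "p = lc (\<lambda>t. if deg3 t \<le> K then c t else 0) id (TR K)"
    using poly_deg_lc[OF assms] by blast
  show ?thesis unfolding c by (rule lc_curl_grad[OF finite_TR])
qed

lemma poly_has_derivative:
  assumes "poly_deg K p"
  shows "(p has_derivative frechet_derivative p (at x)) (at x)"
proof -
  obtain c where c: "p = lc (\<lambda>t. if deg3 t \<le> K then c t else 0) id (TR K)"
    using poly_deg_lc[OF assms] by blast
  have "lc (\<lambda>t. if deg3 t \<le> K then c t else 0) id (TR K) differentiable (at x)"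
    using lc_deriv[OF finite_TR] by (rule differentiableI)
  then show ?thesis unfolding c frechet_derivative_works .
qed

lemma bary_unique:
  fixes T :: "pt set"
  assumes "finite T" "\<not> affine_dependent T" "sum u T = 1" "sum w T = 1"
    "(\<Sum>v\<in>T. u v *\<^sub>R v) = (\<Sum>v\<in>T. w v *\<^sub>R v)" "v \<in> T"
  shows "u v = w v"
proof (rule ccontr)
  assume ne: "u v \<noteq> w v"
  have "affine_dependent T"
    unfolding affine_dependent_explicit_finite[OF assms(1)]
  proof (intro exI conjI)
    show "sum (\<lambda>v. u v - w v) T = 0" using assms(3,4) by (simp add: sum_subtractf)
    show "\<exists>v\<in>T. u v - w v \<noteq> 0" using ne assms(6) by auto
    show "(\<Sum>v\<in>T. (u v - w v) *\<^sub>R v) = 0" using assms(5) by (simp add: scaleR_diff_left sum_subtractf)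
  qed
  then show False using assms(2) by simp
qed

lemma hull_coeffs:
  fixes T :: "pt set"
  assumes "finite T" "F \<subseteq> T" "x \<in> convex hull F"
  shows "\<exists>u. (\<forall>v\<in>T. 0 \<le> u v) \<and> (\<forall>v\<in>T - F. u v = 0) \<and> sum u T = 1 \<and> (\<Sum>v\<in>T. u v *\<^sub>R v) = x"
proof -
  have fF: "finite F" using assms finite_subset by blast
  obtain w where w: "\<forall>v\<in>F. 0 \<le> w v" "sum w F = 1" "(\<Sum>v\<in>F. w v *\<^sub>R v) = x"
    using assms(3) unfolding convex_hull_finite[OF fF] by blast
  define u where "u v = (if v \<in> F then w v else 0)" for v
  have s1: "sum u T = sum u F" by (rule sum.mono_neutral_right) (auto simp: assms u_def)
  have s2: "(\<Sum>v\<in>T. u v *\<^sub>R v) = (\<Sum>v\<in>F. u v *\<^sub>R v)" by (rule sum.mono_neutral_right) (auto simp: assms u_def)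
  show ?thesis
    apply (rule exI[of _ u])
    using w s1 s2 by (auto simp: u_def)
qed

lemma hull_rel_coeffs:
  fixes T :: "pt set"
  assumes "finite T" "F \<subseteq> T" "\<not> affine_dependent T" "x \<in> rel_interior (convex hull F)"
  shows "\<exists>u. (\<forall>v\<in>F. 0 < u v) \<and> sum u T = 1 \<and> (\<Sum>v\<in>T. u v *\<^sub>R v) = x"
proof -
  have fF: "finite F" using assms finite_subset by blast
  have ind: "\<not> affine_dependent F" using assms affine_independent_subset by blast
  obtain w where w: "\<forall>v\<in>F. 0 < w v" "sum w F = 1" "(\<Sum>v\<in>F. w v *\<^sub>R v) = x"
    using assms(4) unfolding rel_interior_convex_hull_explicit[OF ind] by blast
  define u where "u v = (if v \<in> F then w v else 0)" for v
  have s1: "sum u T = sum u F" by (rule sum.mono_neutral_right) (auto simp: assms u_def)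
  have s2: "(\<Sum>v\<in>T. u v *\<^sub>R v) = (\<Sum>v\<in>F. u v *\<^sub>R v)" by (rule sum.mono_neutral_right) (auto simp: assms u_def)
  show ?thesis
    apply (rule exI[of _ u])
    using w s1 s2 by (auto simp: u_def)
qed

lemma outside_simplex:
  fixes T :: "pt set"
  assumes "finite T" "\<not> affine_dependent T" "F \<subseteq> T" "p \<in> T - F" "x \<in> convex hull F" "s > 0"
  shows "x + s *\<^sub>R (x - p) \<notin> convex hull T"
proof
  assume y: "x + s *\<^sub>R (x - p) \<in> convex hull T"
  obtain l where l: "\<forall>v\<in>T. 0 \<le> l v" "sum l T = 1" "(\<Sum>v\<in>T. l v *\<^sub>R v) = x + s *\<^sub>R (x - p)"
    using hull_coeffs[OF assms(1) order_refl y] by blast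
  obtain u where u: "\<forall>v\<in>T - F. u v = 0" "sum u T = 1" "(\<Sum>v\<in>T. u v *\<^sub>R v) = x"
    using hull_coeffs[OF assms(1,3,5)] by blast
  define m where "m v = (1 / (1 + s)) * l v + (if v = p then s / (1 + s) else 0)" for v
  have pT: "p \<in> T" using assms by auto
  have sm: "sum m T = 1"
    unfolding m_def sum.distrib sum_distrib_left[symmetric] using l(2) pT assms(6) assms(1)
    by (simp add: field_simps sum.delta)
  have "(\<Sum>v\<in>T. m v *\<^sub>R v) = (1 / (1 + s)) *\<^sub>R (\<Sum>v\<in>T. l v *\<^sub>R v) + (s / (1 + s)) *\<^sub>R p"
    unfolding m_def scaleR_add_left sum.distrib scaleR_sum_right
    using pT assms(1) by (simp add: if_distrib[of "\<lambda>c. c *\<^sub>R _"] sum.delta cong: if_cong)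
  also have "\<dots> = x"
    unfolding l(3) using assms(6)
    by (simp add: algebra_simps divide_simps scaleR_add_right[symmetric] flip: scaleR_add_left)
  finally have sx: "(\<Sum>v\<in>T. m v *\<^sub>R v) = x" .
  have "m p = u p"
    using bary_unique[OF assms(1,2) sm u(2)] sx u(3) pT by simp
  moreover have "u p = 0" using u(1) assms(4) by blast
  moreover have "m p > 0" unfolding m_def using l(1) pT assms(6)
    by (simp add: add_nonneg_pos)
  ultimately show False by simp
qed

lemma boundary_facet_frontier:
  assumes tri: "triangulation \<Omega> \<T>" and op: "open \<Omega>" and bf: "boundary_facet \<T> F"
    and T: "T \<in> \<T>" "F \<subseteq> T" and x: "x \<in> rel_interior (convex hull F)"
  shows "x \<in> frontier \<Omega>"
proof -
  have finT: "finite \<T>" and cardT: "card T = 4" and indT: "\<not> affine_dependent T"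
    and cov: "\<Union>((\<lambda>T. convex hull T) ` \<T>) = closure \<Omega>"
    and int: "\<And>T1 T2. T1 \<in> \<T> \<Longrightarrow> T2 \<in> \<T> \<Longrightarrow> convex hull T1 \<inter> convex hull T2 = convex hull (T1 \<inter> T2)"
    using tri T unfolding triangulation_def by auto
  have fT: "finite T" using cardT card_ge_0_finite by force
  obtain T0 where "T0 \<in> \<T>" "F \<subseteq> T0" "card F = 3" using bf unfolding boundary_facet_def facets_def by blast
  then have cardF: "card F = 3" by simp
  have c1: "card (elems_of \<T> F) = 1" using bf unfolding boundary_facet_def by simp
  have xF: "x \<in> convex hull F" using x rel_interior_subset by blast
  have xT: "x \<in> convex hull T" using xF hull_mono[OF T(2)] by blast
  have xcl: "x \<in> closure \<Omega>" using xT T cov by blast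
  obtain p where p: "p \<in> T - F"
  proof -
    have "F \<noteq> T" using cardF cardT by auto
    then show ?thesis using that T(2) by blast
  qed
  define K where "K = \<Union>((\<lambda>T. convex hull T) ` (\<T> - {T}))"
  have clK: "closed K" unfolding K_def
  proof (rule closed_Union)
    show "finite ((\<lambda>T. convex hull T) ` (\<T> - {T}))" using finT by simp
    show "\<forall>S\<in>(\<lambda>T. convex hull T) ` (\<T> - {T}). closed S"
    proof
      fix S assume "S \<in> (\<lambda>T. convex hull T) ` (\<T> - {T})"
      then obtain T' where "T' \<in> \<T>" "S = convex hull T'" by blast
      moreover have "finite T'" using tri \<open>T' \<in> \<T>\<close> unfolding triangulation_def
        using card_ge_0_finite by force
      ultimately show "closed S" by (simp add: compact_imp_closed finite_imp_compact_convex_hull)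
    qed
  qed
  show ?thesis
  proof (rule ccontr)
    assume "x \<notin> frontier \<Omega>"
    then have xO: "x \<in> \<Omega>" using xcl op by (simp add: frontier_def interior_open)
    obtain r where r: "r > 0" "ball x r \<subseteq> \<Omega>" using op xO open_contains_ball by blast
    have xK: "x \<in> K"
    proof (rule ccontr)
      assume "x \<notin> K"
      moreover have "open (- K)" using clK by (simp add: closed_def)
      ultimately obtain d where d: "d > 0" "ball x d \<subseteq> - K"
        using open_contains_ball[of "- K"] by blast
      define s where "s = min r d / (2 * (norm (x - p) + 1))"
      have s0: "s > 0" unfolding s_def using r d by (intro divide_pos_pos) (auto simp: add_pos_nonneg, smt (verit) norm_ge_zero)
      define y where "y = x + s *\<^sub>R (x - p)"
      have "dist x y = s * norm (x - p)" unfolding y_def dist_norm using s0 by simp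
      also have "\<dots> < min r d"
      proof -
        have "s * norm (x - p) \<le> s * (norm (x - p) + 1)" using s0 by simp
        also have "\<dots> = min r d / 2" unfolding s_def using norm_ge_zero[of "x - p"] by (simp add: divide_simps) (smt (verit) norm_ge_zero)
        finally show ?thesis using r d by simp
      qed
      finally have dy: "dist x y < r" "dist x y < d" by auto
      then have "y \<in> \<Omega>" using r by auto
      then have "y \<in> closure \<Omega>" using closure_subset by blast
      then obtain T' where T': "T' \<in> \<T>" "y \<in> convex hull T'" using cov by blast
      have "T' \<noteq> T" using outside_simplex[OF fT indT T(2) p xF s0] T' unfolding y_def by blast
      then have "y \<in> K" unfolding K_def using T' by blast
      then show False using d dy by auto
    qed
    then obtain T' where T': "T' \<in> \<T>" "T' \<noteq> T" "x \<in> convex hull T'" unfolding K_def by blast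
    have "x \<in> convex hull (T \<inter> T')" using int[OF T(1) T'(1)] xT T' by blast
    then obtain u where u: "\<forall>v\<in>T - (T \<inter> T'). u v = 0" "sum u T = 1" "(\<Sum>v\<in>T. u v *\<^sub>R v) = x"
      using hull_coeffs[OF fT, of "T \<inter> T'"] by blast
    obtain w where w: "\<forall>v\<in>F. 0 < w v" "sum w T = 1" "(\<Sum>v\<in>T. w v *\<^sub>R v) = x"
      using hull_rel_coeffs[OF fT T(2) indT x] by blast
    have "F \<subseteq> T'"
    proof
      fix v assume vF: "v \<in> F"
      then have vT: "v \<in> T" using T by blast
      have "w v = u v" using bary_unique[OF fT indT w(2) u(2)] w(3) u(3) vT by simp
      then show "v \<in> T'" using w(1) u(1) vF vT by force
    qed
    then have "{T, T'} \<subseteq> elems_of \<T> F" using T T' unfolding elems_of_def by auto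
    moreover have "finite (elems_of \<T> F)" using finT unfolding elems_of_def by simp
    ultimately have "card {T, T'} \<le> 1" using c1 card_mono by metis
    then show False using T'(2) by simp
  qed
qed

lemma deriv_zero_hull:
  fixes q :: "pt \<Rightarrow> real"
  assumes D: "(q has_derivative D) (at x)" and xS: "x \<in> S" and yS: "y \<in> S" and cvx: "convex S"
    and z: "\<forall>z\<in>S. q z = 0"
  shows "D (y - x) = 0"
proof -
  let ?g = "\<lambda>t::real. q (x + t *\<^sub>R (y - x))"
  have path: "((\<lambda>t::real. x + t *\<^sub>R (y - x)) has_derivative (\<lambda>t. t *\<^sub>R (y - x))) (at 0 within cbox 0 1)"
    by (auto intro!: derivative_eq_intros)
  have qd: "(q has_derivative D) (at ((\<lambda>t::real. x + t *\<^sub>R (y - x)) 0) within (\<lambda>t::real. x + t *\<^sub>R (y - x)) ` cbox 0 1)"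
    using D by (simp add: has_derivative_at_withinI)
  have "((q \<circ> (\<lambda>t::real. x + t *\<^sub>R (y - x))) has_derivative (D \<circ> (\<lambda>t. t *\<^sub>R (y - x)))) (at 0 within cbox 0 1)"
    by (rule diff_chain_within[OF path qd])
  moreover have "(D \<circ> (\<lambda>t. t *\<^sub>R (y - x))) = (\<lambda>t. t *\<^sub>R D (y - x))"
    using linear_cmul[OF bounded_linear.linear[OF has_derivative_bounded_linear[OF D]]] by (auto simp: o_def)
  ultimately have g1: "(?g has_vector_derivative D (y - x)) (at 0 within cbox 0 1)"
    unfolding has_vector_derivative_def by (simp add: o_def)
  have gz: "?g t = 0" if "t \<in> cbox 0 1" for t
  proof -
    have t: "0 \<le> t" "t \<le> 1" using that by (auto simp: interval_cbox[symmetric])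
    have "x + t *\<^sub>R (y - x) = (1 - t) *\<^sub>R x + t *\<^sub>R y" by (simp add: algebra_simps)
    also have "\<dots> \<in> S" using convexD[OF cvx xS yS, of "1 - t" t] t by simp
    finally show ?thesis using z by blast
  qed
  have g0: "(?g has_vector_derivative 0) (at 0 within cbox 0 1)"
    by (rule has_vector_derivative_transform[of 0 "cbox 0 1" _ "\<lambda>_. 0"])
       (use gz in \<open>auto simp: interval_cbox[symmetric]\<close>)
  show ?thesis
    using vector_derivative_unique_within_closed_interval[of 0 1 0 ?g, OF _ _ g1 g0]
    by (simp add: interval_cbox[symmetric])
qed

lemma grad_inner:
  assumes D: "(p has_derivative D) (at x)"
  shows "grad p x \<bullet> u = D u"
proof -
  interpret bounded_linear D using has_derivative_bounded_linear[OF D] .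
  have g: "grad p x = (\<chi> j. D (axis j 1))" unfolding grad_def frechet_derivative_at[OF D] ..
  have "u = (\<Sum>j\<in>UNIV. u $ j *\<^sub>R axis j 1)"
    using basis_expansion[of u] by (simp add: scalar_mult_eq_scaleR)
  then have "D u = (\<Sum>j\<in>UNIV. u $ j *\<^sub>R D (axis j 1))"
    by (metis (no_types, lifting) scaleR sum sum.cong)
  then show ?thesis unfolding g inner_vec_def by (simp add: mult.commute)
qed

lemma triple_cross: "cross3 a (cross3 b c) = (a \<bullet> c) *\<^sub>R b - (a \<bullet> b) *\<^sub>R c"
  by (simp add: cross3_simps forall_3)

lemma cross_nz:
  fixes a b c :: pt
  assumes "\<not> affine_dependent {a, b, c}" "a \<noteq> b" "a \<noteq> c" "b \<noteq> c"
  shows "cross3 (b - a) (c - a) \<noteq> 0"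
proof
  assume "cross3 (b - a) (c - a) = 0"
  then have "collinear {0, b - a, c - a}" by (simp add: cross_eq_0)
  then have "collinear {b, a, c}" by (simp add: collinear_3)
  then have "collinear {a, b, c}" by (simp add: insert_commute)
  then show False using assms collinear_3_eq_affine_dependent by blast
qed

lemma tang_zero:
  fixes u w v n :: pt
  assumes m: "cross3 u w \<noteq> 0" and vu: "v \<bullet> u = 0" and vw: "v \<bullet> w = 0"
    and n: "n = (1 / norm (cross3 u w)) *\<^sub>R cross3 u w \<or> n = - ((1 / norm (cross3 u w)) *\<^sub>R cross3 u w)"
  shows "tang n v = 0"
proof -
  define m where "m = cross3 u w"
  have "cross3 v m = 0" unfolding m_def triple_cross using vu vw by (simp add: inner_commute)
  then have "cross3 m (cross3 v m) = 0" by simp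
  then have "(m \<bullet> m) *\<^sub>R v = (m \<bullet> v) *\<^sub>R m" unfolding triple_cross by simp
  moreover have mm: "m \<bullet> m \<noteq> 0" using m unfolding m_def by simp
  ultimately have v: "v = ((m \<bullet> v) / (m \<bullet> m)) *\<^sub>R m"
    by (metis (no_types, lifting) divide_inverse_commute inverse_eq_divide scaleR_scaleR scaleR_one right_inverse)
  have nn: "norm m * norm m = m \<bullet> m" by (simp add: dot_square_norm power2_eq_square)
  have key: "(v \<bullet> (c *\<^sub>R m)) *\<^sub>R (c *\<^sub>R m) = v" if c: "c * c * (m \<bullet> m) = 1" for c
  proof -
    have "(v \<bullet> (c *\<^sub>R m)) *\<^sub>R (c *\<^sub>R m) = (c * c * (m \<bullet> v)) *\<^sub>R m"
      by (simp add: inner_commute)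
    also have "c * c = 1 / (m \<bullet> m)" using c mm by (simp add: field_simps)
    finally show ?thesis using v by simp
  qed
  have c1: "(1 / norm m) * (1 / norm m) * (m \<bullet> m) = 1" using mm nn[symmetric] by simp
  have c2: "(- (1 / norm m)) * (- (1 / norm m)) * (m \<bullet> m) = 1" using mm nn[symmetric] by simp
  have "(v \<bullet> n) *\<^sub>R n = v"
    using n unfolding m_def[symmetric]
    using key[OF c1] key[OF c2] by auto
  then show ?thesis unfolding tang_def by simp
qed

lemma fverts_eq:
  assumes "card F = 3"
  shows "F = {fst (fverts F), fst (snd (fverts F)), snd (snd (fverts F))}"
proof -
  obtain a b c where "F = {a, b, c}" using assms by (auto simp: card_3_iff)
  then have ex: "\<exists>t. (\<lambda>(a, b, c). F = {a, b, c}) t" by auto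
  have "(\<lambda>(a, b, c). F = {a, b, c}) (fverts F)"
    unfolding fverts_def by (rule someI_ex[OF ex])
  then show ?thesis by (cases "fverts F") auto
qed

lemma normal_form:
  assumes "card F = 3"
  obtains a b c where "F = {a, b, c}" "a \<noteq> b" "a \<noteq> c" "b \<noteq> c"
    "outward_normal T F = (1 / norm (cross3 (b - a) (c - a))) *\<^sub>R cross3 (b - a) (c - a) \<or>
     outward_normal T F = - ((1 / norm (cross3 (b - a) (c - a))) *\<^sub>R cross3 (b - a) (c - a))"
proof -
  obtain a b c where abc: "fverts F = (a, b, c)" by (cases "fverts F") auto
  have F: "F = {a, b, c}" using fverts_eq[OF assms] abc by simp
  have d: "a \<noteq> b" "a \<noteq> c" "b \<noteq> c" using assms F by (auto simp: card_insert_if split: if_splits)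
  show ?thesis
    apply (rule that[OF F d])
    unfolding outward_normal_def abc Let_def by auto
qed

lemma facet_tang:
  fixes q :: "pt \<Rightarrow> real"
  assumes FT: "F \<subseteq> T" and ind: "\<not> affine_dependent T" and cF: "card F = 3"
    and D: "(q has_derivative D) (at x)" and x: "x \<in> convex hull F"
    and z: "\<forall>z\<in>convex hull F. q z = 0" and w: "\<And>u. w \<bullet> u = D u"
  shows "tang (outward_normal T' F) w = 0"
proof -
  obtain a b c where F: "F = {a, b, c}" "a \<noteq> b" "a \<noteq> c" "b \<noteq> c"
    and n: "outward_normal T' F = (1 / norm (cross3 (b - a) (c - a))) *\<^sub>R cross3 (b - a) (c - a) \<or>
     outward_normal T' F = - ((1 / norm (cross3 (b - a) (c - a))) *\<^sub>R cross3 (b - a) (c - a))"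
    using normal_form[OF cF, of T'] by blast
  have indF: "\<not> affine_dependent {a, b, c}" using affine_independent_subset[OF ind FT] F by simp
  have lin: "linear D" using has_derivative_bounded_linear[OF D] bounded_linear.linear by blast
  have cvx: "convex (convex hull F)" by simp
  have h: "D (y - x) = 0" if "y \<in> F" for y
    using deriv_zero_hull[OF D x _ cvx z] that hull_inc[of y F] by blast
  have "D (b - a) = D ((b - x) - (a - x))" by simp
  also have "\<dots> = 0" using linear_diff[OF lin] h F by simp
  finally have db: "w \<bullet> (b - a) = 0" using w by simp
  have "D (c - a) = D ((c - x) - (a - x))" by simp
  also have "\<dots> = 0" using linear_diff[OF lin] h F by simp
  finally have dc: "w \<bullet> (c - a) = 0" using w by simp
  show ?thesis by (rule tang_zero[OF cross_nz[OF indF F(2-4)] db dc n])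
qed

lemma tang_diff: "tang n (v1 - v2) = tang n v1 - tang n v2"
  unfolding tang_def by (simp add: algebra_simps inner_diff_left)

lemma jac_zero: "jac (\<lambda>x. 0) x = 0"
  unfolding jac_def by (simp add: vec_eq_iff)

lemma facet_integral_zero: "facet_integral F (\<lambda>x. 0) = 0"
proof -
  have e: "(\<lambda>(s::real, t::real). (0::real)) = (\<lambda>_. 0)" by auto
  show ?thesis unfolding facet_integral_def by (simp add: e split: prod.split)
qed

lemma poly_cont: "poly_deg K p \<Longrightarrow> continuous_on S p"
  by (meson continuous_at_imp_continuous_on has_derivative_continuous poly_has_derivative)

theorem lemma5p4:
  fixes \<Omega> :: "(real^3) set" and k :: nat and \<rho> :: real
  assumes "lipschitz_domain \<Omega>" and "simply_connected \<Omega>" and "k \<ge> 2"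
  shows "\<exists>C>0. \<forall>\<T> \<nu> \<sigma> \<mu>.
     triangulation \<Omega> \<T> \<and> shape_regular \<rho> \<T> \<and> quasi_uniform \<rho> \<T> \<and> \<nu> > 0 \<and>
     \<sigma> \<in> Sigma_h \<T> (k - 1) \<and> \<mu> \<in> S_h \<Omega> \<T> (k + 1) \<and>
     (\<forall>\<phi>\<in>W_h \<T> k. b_form \<T> \<sigma> (curl_h \<phi>) + bg_form \<T> \<phi> \<mu> = 0)
     \<longrightarrow> L2sq_mat \<T> \<sigma> + L2sq_grad \<T> \<mu> \<le> C * (\<nu> * a_form \<nu> \<T> \<sigma> \<sigma>)"
proof -
  have op: "open \<Omega>" using assms(1) unfolding lipschitz_domain_def by blast
  show ?thesis
  proof (rule exI[of _ 1], intro conjI allI impI)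
    show "(0::real) < 1" by simp
    fix \<T> :: "pt set set" and \<nu> :: real and \<sigma> :: "mat3 pw" and \<mu> :: "real pw"
    assume H: "triangulation \<Omega> \<T> \<and> shape_regular \<rho> \<T> \<and> quasi_uniform \<rho> \<T> \<and> \<nu> > 0 \<and>
     \<sigma> \<in> Sigma_h \<T> (k - 1) \<and> \<mu> \<in> S_h \<Omega> \<T> (k + 1) \<and>
     (\<forall>\<phi>\<in>W_h \<T> k. b_form \<T> \<sigma> (curl_h \<phi>) + bg_form \<T> \<phi> \<mu> = 0)"
    then have tri: "triangulation \<Omega> \<T>" and nu: "\<nu> > 0" and muS: "\<mu> \<in> S_h \<Omega> \<T> (k + 1)"
      and hyp: "\<forall>\<phi>\<in>W_h \<T> k. b_form \<T> \<sigma> (curl_h \<phi>) + bg_form \<T> \<phi> \<mu> = 0" by auto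
    have polyT: "\<And>T. T \<in> \<T> \<Longrightarrow> poly_deg (Suc k) (\<mu> T)" using muS unfolding S_h_def by simp
    have cont: "\<And>T1 T2 x. T1 \<in> \<T> \<Longrightarrow> T2 \<in> \<T> \<Longrightarrow> x \<in> convex hull T1 \<inter> convex hull T2 \<Longrightarrow> \<mu> T1 x = \<mu> T2 x"
      using muS unfolding S_h_def by blast
    have bd: "\<And>T x. T \<in> \<T> \<Longrightarrow> x \<in> convex hull T \<inter> frontier \<Omega> \<Longrightarrow> \<mu> T x = 0"
      using muS unfolding S_h_def by blast
    have indT: "\<And>T. T \<in> \<T> \<Longrightarrow> \<not> affine_dependent T" using tri unfolding triangulation_def by blast
    have cardT: "\<And>T. T \<in> \<T> \<Longrightarrow> card T = 4" using tri unfolding triangulation_def by blast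
    define \<phi> where "\<phi> = (\<lambda>T. grad (\<mu> T))"
    have \<phi>W: "\<phi> \<in> W_h \<T> k"
      unfolding W_h_def mem_Collect_eq
    proof (intro conjI allI impI ballI)
      fix T assume "T \<in> \<T>"
      then show "vpoly_deg k (\<phi> T)" unfolding vpoly_deg_def \<phi>_def using poly_grad[OF polyT[OF \<open>T \<in> \<T>\<close>]] by blast
    next
      fix F T1 T2 x
      assume iF: "interior_facet \<T> F" and T1: "T1 \<in> elems_of \<T> F" and T2: "T2 \<in> elems_of \<T> F"
        and x: "x \<in> convex hull F"
      have cF: "card F = 3" using iF unfolding interior_facet_def facets_def by blast
      have T1': "T1 \<in> \<T>" "F \<subseteq> T1" and T2': "T2 \<in> \<T>" "F \<subseteq> T2" using T1 T2 unfolding elems_of_def by auto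
      let ?q = "\<lambda>z. \<mu> T1 z - \<mu> T2 z"
      let ?D1 = "frechet_derivative (\<mu> T1) (at x)" and ?D2 = "frechet_derivative (\<mu> T2) (at x)"
      have D1: "(\<mu> T1 has_derivative ?D1) (at x)" using poly_has_derivative polyT T1' by blast
      have D2: "(\<mu> T2 has_derivative ?D2) (at x)" using poly_has_derivative polyT T2' by blast
      have Dq: "(?q has_derivative (\<lambda>h. ?D1 h - ?D2 h)) (at x)" using has_derivative_diff[OF D1 D2] .
      have zq: "\<forall>z\<in>convex hull F. ?q z = 0"
      proof
        fix z assume "z \<in> convex hull F"
        then have "z \<in> convex hull T1 \<inter> convex hull T2" using hull_mono[OF T1'(2)] hull_mono[OF T2'(2)] by blast
        then show "?q z = 0" using cont[OF T1'(1) T2'(1)] by simp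
      qed
      have w: "(grad (\<mu> T1) x - grad (\<mu> T2) x) \<bullet> u = ?D1 u - ?D2 u" for u
        using grad_inner[OF D1] grad_inner[OF D2] by (simp add: inner_diff_left)
      have "tang (facet_normal \<T> F) (grad (\<mu> T1) x - grad (\<mu> T2) x) = 0"
        unfolding facet_normal_def
        by (rule facet_tang[OF T1'(2) indT[OF T1'(1)] cF Dq x zq w])
      then show "tang (facet_normal \<T> F) (\<phi> T1 x) = tang (facet_normal \<T> F) (\<phi> T2 x)"
        unfolding \<phi>_def tang_diff by (metis right_minus_eq)
    next
      fix F T x
      assume bF: "boundary_facet \<T> F" and T: "T \<in> elems_of \<T> F" and x: "x \<in> convex hull F"
      have cF: "card F = 3" using bF unfolding boundary_facet_def facets_def by blast
      have T': "T \<in> \<T>" "F \<subseteq> T" using T unfolding elems_of_def by auto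
      have fF: "finite F" using cF card_ge_0_finite by force
      have zr: "\<mu> T z = 0" if "z \<in> rel_interior (convex hull F)" for z
      proof -
        have "z \<in> frontier \<Omega>" using boundary_facet_frontier[OF tri op bF T' that] .
        moreover have "z \<in> convex hull T" using that rel_interior_subset hull_mono[OF T'(2)] by blast
        ultimately show ?thesis using bd T' by blast
      qed
      have cl: "closure (rel_interior (convex hull F)) = convex hull F"
        using convex_closure_rel_interior[of "convex hull F"] fF
        by (simp add: compact_imp_closed finite_imp_compact_convex_hull)
      have zq: "\<forall>z\<in>convex hull F. \<mu> T z = 0"
      proof
        fix z assume "z \<in> convex hull F"
        then have zc: "z \<in> closure (rel_interior (convex hull F))" using cl by simp
        have cc: "continuous_on (closure (rel_interior (convex hull F))) (\<mu> T)"
          by (rule poly_cont[OF polyT[OF T'(1)]])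
        show "\<mu> T z = 0" using continuous_constant_on_closure[OF cc zr zc] by simp
      qed
      have D: "(\<mu> T has_derivative frechet_derivative (\<mu> T) (at x)) (at x)" using poly_has_derivative polyT T' by blast
      show "tang (facet_normal \<T> F) (\<phi> T x) = 0"
        unfolding facet_normal_def \<phi>_def
        by (rule facet_tang[OF T'(2) indT[OF T'(1)] cF D x zq grad_inner[OF D]])
    qed
    have cz: "curl_h \<phi> T = (\<lambda>x. 0)" if "T \<in> \<T>" for T
      unfolding curl_h_def \<phi>_def using poly_curl_grad polyT[OF that] by blast
    have b0: "b_form \<T> \<sigma> (curl_h \<phi>) = 0"
    proof -
      have s1: "(\<Sum>T\<in>\<T>. integral (convex hull T) (\<lambda>x. frob (\<sigma> T x) (jac (curl_h \<phi> T) x))) = 0"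
        by (rule sum.neutral) (simp add: cz jac_zero frob_def)
      have j0: "jump_t \<T> F (curl_h \<phi>) x = 0" for F x
        unfolding jump_t_def
        by (rule sum.neutral) (auto simp: elems_of_def cz tang_def)
      show ?thesis unfolding b_form_def s1 j0 by (simp add: facet_integral_zero)
    qed
    have "bg_form \<T> \<phi> \<mu> = L2sq_grad \<T> \<mu>" unfolding bg_form_def L2sq_grad_def \<phi>_def ..
    then have g0: "L2sq_grad \<T> \<mu> = 0" using hyp \<phi>W b0 by auto
    have "\<nu> * a_form \<nu> \<T> \<sigma> \<sigma> = L2sq_mat \<T> \<sigma>" unfolding a_form_def L2sq_mat_def using nu by simp
    then show "L2sq_mat \<T> \<sigma> + L2sq_grad \<T> \<mu> \<le> 1 * (\<nu> * a_form \<nu> \<T> \<sigma> \<sigma>)" using g0 by simp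
  qed
qed

end
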